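(* Let $n\ge 2$. The principal minor lattice $L'_n$ is minimally generated by \[\mathcal B'=\{2[in|jn] : i\neq j\in[n-1]\}\cup\{[in|in] : i\in[n-1]\}.\] Furthermore the group $L_n/L'_n$ is isomorphic to $(\mathbb{Z}/2\mathbb{Z})^{c_{n-1}}$, where $c_{n-1}=\binom{n-1}{2}$.
   Context: $[n]=\{1,\dots,n\}$. $\mathbb{Z}^{\binom{n+1}{2}}$ has standard basis $e_{ij}$, $1\le i\le j\le n$, with $e_{ij}=e_{ji}$. For $i,j,k,l\in[n]$, $[ij|kl]:=e_{ik}+e_{jl}-e_{il}-e_{jk}$ (so $[in|jn]=[jn|in]$). $V_n$ is the $n\times\binom{n+1}{2}$ integer matrix whose column indexed by $jk$ is $e_j+e_k\in\mathbb{Z}^n$, and $L_n=\ker_{\mathbb{Z}}(V_n)$. The principal minor lattice $L'_n$ is the sublattice of $\mathbb{Z}^{\binom{n+1}{2}}$ generated by the vectors $[ij|ij]$, $i,j\in[n]$ (exponent vectors of the principal $2$-minors $x_{ii}x_{jj}-x_{ij}^2$). *)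

theory Defs
  imports "HOL-Algebra.Algebra" "HOL-Library.Function_Algebras"
begin

text \<open>Vectors of \<open>Z^(binom(n+1,2))\<close> are functions \<open>nat \<times> nat \<Rightarrow> int\<close>, where the coordinate
  indexed by \<open>ij\<close> (\<open>1 \<le> i \<le> j \<le> n\<close>) is the value at the pair \<open>(i,j)\<close>; all other values are 0.\<close>

definition Idx :: "nat \<Rightarrow> (nat \<times> nat) set" where
  "Idx n = {(i, j). 1 \<le> i \<and> i \<le> j \<and> j \<le> n}"

definition e :: "nat \<Rightarrow> nat \<Rightarrow> (nat \<times> nat \<Rightarrow> int)" where
  "e i j = (\<lambda>p. if p = (min i j, max i j) then 1 else 0)"

definition bracket :: "nat \<Rightarrow> nat \<Rightarrow> nat \<Rightarrow> nat \<Rightarrow> (nat \<times> nat \<Rightarrow> int)" where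
  "bracket i j k l = e i k + e j l - e i l - e j k"

definition Zspan :: "(nat \<times> nat \<Rightarrow> int) set \<Rightarrow> (nat \<times> nat \<Rightarrow> int) set" where
  "Zspan S = {x. \<exists>F c. finite F \<and> F \<subseteq> S \<and> x = (\<Sum>v\<in>F. (\<lambda>p. c v * v p))}"

text \<open>\<open>L_n = ker_Z(V_n)\<close>: column \<open>jk\<close> of \<open>V_n\<close> is \<open>e_j + e_k \<in> Z^n\<close>.\<close>
definition Vn :: "nat \<Rightarrow> (nat \<times> nat \<Rightarrow> int) \<Rightarrow> nat \<Rightarrow> int" where
  "Vn n x m = (\<Sum>(j, k)\<in>Idx n. x (j, k) * ((if j = m then 1 else 0) + (if k = m then 1 else 0)))"

definition L :: "nat \<Rightarrow> (nat \<times> nat \<Rightarrow> int) set" where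
  "L n = {x. (\<forall>p. p \<notin> Idx n \<longrightarrow> x p = 0) \<and> (\<forall>m\<in>{1..n}. Vn n x m = 0)}"

definition Lprime :: "nat \<Rightarrow> (nat \<times> nat \<Rightarrow> int) set" where
  "Lprime n = Zspan {bracket i j i j | i j. i \<in> {1..n} \<and> j \<in> {1..n}}"

definition Bprime :: "nat \<Rightarrow> (nat \<times> nat \<Rightarrow> int) set" where
  "Bprime n = {(\<lambda>p. 2 * bracket i n j n p) | i j. i \<in> {1..n-1} \<and> j \<in> {1..n-1} \<and> i \<noteq> j}
            \<union> {bracket i n i n | i. i \<in> {1..n-1}}"

definition Lgroup :: "nat \<Rightarrow> (nat \<times> nat \<Rightarrow> int) monoid" where
  "Lgroup n = \<lparr>carrier = L n, monoid.mult = (+), one = 0\<rparr>"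

end

theory Submission imports Defs begin

lemma sum_fun_apply': "(\<Sum>a\<in>A. f a) x = (\<Sum>a\<in>A. f a x)"
  by (induction A rule: infinite_finite_induct) auto

lemma zspan_char: "x \<in> Zspan S \<longleftrightarrow> (\<exists>F c. finite F \<and> F \<subseteq> S \<and> (\<forall>p. x p = (\<Sum>v\<in>F. c v * v p)))"
  unfolding Zspan_def by (auto simp: sum_fun_apply' fun_eq_iff)

lemma zspan_lin:
  assumes "finite Q" "x \<in> Zspan S" "\<forall>v\<in>S. d dvd (\<Sum>q\<in>Q. v q * w q)"
  shows "d dvd (\<Sum>q\<in>Q. x q * w q)"
proof -
  obtain F c where F: "finite F" "F \<subseteq> S" "\<forall>p. x p = (\<Sum>v\<in>F. c v * v p)"
    using assms(2) unfolding zspan_char by blast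
  have xq: "\<And>q. x q = (\<Sum>v\<in>F. c v * v q)" using F(3) by blast
  have "(\<Sum>q\<in>Q. x q * w q) = (\<Sum>q\<in>Q. \<Sum>v\<in>F. c v * (v q * w q))"
    by (simp only: xq sum_distrib_right mult.assoc)
  also have "\<dots> = (\<Sum>v\<in>F. c v * (\<Sum>q\<in>Q. v q * w q))"
    by (subst sum.swap) (simp only: sum_distrib_left)
  finally have eq: "(\<Sum>q\<in>Q. x q * w q) = (\<Sum>v\<in>F. c v * (\<Sum>q\<in>Q. v q * w q))" .
  have "d dvd (\<Sum>v\<in>F. c v * (\<Sum>q\<in>Q. v q * w q))"
  proof (rule dvd_sum)
    fix v assume "v \<in> F"
    then have "d dvd (\<Sum>q\<in>Q. v q * w q)" using F(2) assms(3) by blast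
    then show "d dvd c v * (\<Sum>q\<in>Q. v q * w q)" by (rule dvd_mult)
  qed
  then show ?thesis using eq by simp
qed

lemma zspan_point:
  assumes "x \<in> Zspan S" "\<forall>v\<in>S. d dvd v p"
  shows "d dvd x p"
proof -
  have "d dvd (\<Sum>q\<in>{p}. x q * 1)"
    by (rule zspan_lin[OF _ assms(1)]) (use assms(2) in simp_all)
  then show ?thesis by simp
qed

lemma zspan_0: "0 \<in> Zspan S"
  unfolding Zspan_def by (rule CollectI, rule exI[of _ "{}"], simp)

lemma zspan_base: "v \<in> S \<Longrightarrow> v \<in> Zspan S"
  unfolding zspan_char by (rule exI[of _ "{v}"], rule exI[of _ "\<lambda>_. 1"]) simp

lemma zspan_smult: assumes "x \<in> Zspan S" shows "(\<lambda>p. a * x p) \<in> Zspan S"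
proof -
  obtain F c where F: "finite F" "F \<subseteq> S" "\<forall>p. x p = (\<Sum>v\<in>F. c v * v p)"
    using assms unfolding zspan_char by blast
  have xq: "\<And>q. x q = (\<Sum>v\<in>F. c v * v q)" using F(3) by blast
  have "\<forall>p. a * x p = (\<Sum>v\<in>F. (a * c v) * v p)"
    by (simp only: xq sum_distrib_left mult.assoc, simp)
  then show ?thesis unfolding zspan_char
    by (intro exI[of _ F] exI[of _ "\<lambda>v. a * c v"]) (use F(1,2) in simp)
qed

lemma zspan_add:
  assumes "x \<in> Zspan S" "y \<in> Zspan S" shows "x + y \<in> Zspan S"
proof -
  obtain F c where F: "finite F" "F \<subseteq> S" "\<forall>p. x p = (\<Sum>v\<in>F. c v * v p)"
    using assms(1) unfolding zspan_char by blast
  obtain G d where G: "finite G" "G \<subseteq> S" "\<forall>p. y p = (\<Sum>v\<in>G. d v * v p)"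
    using assms(2) unfolding zspan_char by blast
  define k where "k v = (if v \<in> F then c v else 0) + (if v \<in> G then d v else 0)" for v
  have "\<forall>p. (x + y) p = (\<Sum>v\<in>F \<union> G. k v * v p)"
  proof
    fix p
    have "(\<Sum>v\<in>F \<union> G. k v * v p) = (\<Sum>v\<in>F \<union> G. if v \<in> F then c v * v p else 0)
        + (\<Sum>v\<in>F \<union> G. if v \<in> G then d v * v p else 0)"
      unfolding sum.distrib[symmetric] by (rule sum.cong[OF refl]) (simp add: k_def distrib_right)
    also have "\<dots> = (\<Sum>v\<in>F. c v * v p) + (\<Sum>v\<in>G. d v * v p)"
      using F(1) G(1) by (simp add: sum.inter_restrict[symmetric] Int_absorb1 Int_absorb2 inf_commute)
    moreover have "x p = (\<Sum>v\<in>F. c v * v p)" "y p = (\<Sum>v\<in>G. d v * v p)"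
      using F(3) G(3) by blast+
    ultimately show "(x + y) p = (\<Sum>v\<in>F \<union> G. k v * v p)" by simp
  qed
  then show ?thesis unfolding zspan_char
    by (intro exI[of _ "F \<union> G"] exI[of _ k]) (use F(1,2) G(1,2) in simp)
qed

lemma zspan_neg: assumes "x \<in> Zspan S" shows "- x \<in> Zspan S"
proof -
  have "- x = (\<lambda>p. (-1) * x p)" by (rule ext) simp
  then show ?thesis using zspan_smult[OF assms, of "-1"] by simp
qed

lemma zspan_diff: assumes "x \<in> Zspan S" "y \<in> Zspan S" shows "x - y \<in> Zspan S"
proof -
  have "x - y = x + (- y)" by simp
  then show ?thesis using zspan_add[OF assms(1) zspan_neg[OF assms(2)]] by simp
qed

lemma zspan_sum: assumes "\<And>a. a \<in> A \<Longrightarrow> g a \<in> Zspan S" shows "(\<Sum>a\<in>A. g a) \<in> Zspan S"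
  using assms
proof (induction A rule: infinite_finite_induct)
  case (infinite A) then show ?case using zspan_0[of S, unfolded func_zero] by simp
next
  case empty then show ?case using zspan_0[of S, unfolded func_zero] by simp
next
  case (insert a A)
  have "g a \<in> Zspan S" using insert.prems by simp
  moreover have "(\<Sum>a\<in>A. g a) \<in> Zspan S" using insert.IH insert.prems by simp
  ultimately show ?case unfolding sum.insert[OF insert.hyps] by (rule zspan_add)
qed

lemma zspan_subset: assumes S: "S \<subseteq> Zspan T" shows "Zspan S \<subseteq> Zspan T"
proof
  fix x assume "x \<in> Zspan S"
  then obtain F c where F: "finite F" "F \<subseteq> S" "x = (\<Sum>v\<in>F. (\<lambda>p. c v * v p))"
    unfolding Zspan_def by blast
  show "x \<in> Zspan T" unfolding F(3)
  proof (rule zspan_sum)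
    fix v assume "v \<in> F"
    then have "v \<in> Zspan T" using F(2) S by blast
    then show "(\<lambda>p. c v * v p) \<in> Zspan T" by (rule zspan_smult)
  qed
qed


lemma e_sym: "e a b = e b a"
  unfolding e_def by (simp add: min.commute max.commute)

lemma e_app: "e a b (i, j) = (if i = min a b \<and> j = max a b then 1 else 0)"
  unfolding e_def by auto

lemma finite_Idx: "finite (Idx n)"
  by (rule finite_subset[of _ "{1..n} \<times> {1..n}"]) (auto simp: Idx_def)

definition W :: "nat \<Rightarrow> nat \<times> nat \<Rightarrow> int" where
  "W m q = (if fst q = m then 1 else 0) + (if snd q = m then 1 else 0)"

lemma Vn_alt: "Vn n x m = (\<Sum>q\<in>Idx n. x q * W m q)"
  unfolding Vn_def W_def by (simp add: split_def)

lemma L_char: "x \<in> L n \<longleftrightarrow> (\<forall>p. p \<notin> Idx n \<longrightarrow> x p = 0) \<and> (\<forall>m\<in>{1..n}. (\<Sum>q\<in>Idx n. x q * W m q) = 0)"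
  unfolding L_def Vn_alt by simp

lemma zspan_L: assumes "S \<subseteq> L n" shows "Zspan S \<subseteq> L n"
proof
  fix x assume x: "x \<in> Zspan S"
  have "x p = 0" if p: "p \<notin> Idx n" for p
  proof -
    have "\<forall>v\<in>S. 0 dvd v p"
    proof
      fix v assume "v \<in> S"
      then have "v \<in> L n" using assms by blast
      then show "0 dvd v p" using p unfolding L_char by (cases p) auto
    qed
    then have "0 dvd x p" by (rule zspan_point[OF x])
    then show ?thesis by simp
  qed
  moreover have "(\<Sum>q\<in>Idx n. x q * W m q) = 0" if m: "m \<in> {1..n}" for m
  proof -
    have "\<forall>v\<in>S. 0 dvd (\<Sum>q\<in>Idx n. v q * W m q)"
    proof
      fix v assume "v \<in> S"
      then have "v \<in> L n" using assms by blast
      then show "0 dvd (\<Sum>q\<in>Idx n. v q * W m q)" using m unfolding L_char by auto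
    qed
    then have "0 dvd (\<Sum>q\<in>Idx n. x q * W m q)" by (rule zspan_lin[OF finite_Idx x])
    then show ?thesis by simp
  qed
  ultimately show "x \<in> L n" by (simp add: L_char)
qed

lemma L_closed: "L n = Zspan (L n)"
proof
  show "L n \<subseteq> Zspan (L n)" using zspan_base by blast
  show "Zspan (L n) \<subseteq> L n" by (rule zspan_L) simp
qed

lemma L_add: "x \<in> L n \<Longrightarrow> y \<in> L n \<Longrightarrow> x + y \<in> L n"
  using zspan_add[of x "L n" y] L_closed[of n] by simp
lemma L_neg: "x \<in> L n \<Longrightarrow> - x \<in> L n"
  using zspan_neg[of x "L n"] L_closed[of n] by simp
lemma L_0: "0 \<in> L n"
  using zspan_0[of "L n"] L_closed[of n] by simp

lemma e_Idx: "a \<in> {1..n} \<Longrightarrow> b \<in> {1..n} \<Longrightarrow> (min a b, max a b) \<in> Idx n"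
  by (auto simp: Idx_def)

lemma Ve: assumes "a \<in> {1..n}" "b \<in> {1..n}"
  shows "(\<Sum>q\<in>Idx n. e a b q * W m q) = (if a = m then 1 else 0) + (if b = m then 1 else 0)"
proof -
  have "(\<Sum>q\<in>Idx n. e a b q * W m q) = (\<Sum>q\<in>Idx n. if q = (min a b, max a b) then W m (min a b, max a b) else 0)"
    by (rule sum.cong) (auto simp: e_def)
  also have "\<dots> = W m (min a b, max a b)" using e_Idx[OF assms] finite_Idx by simp
  finally show ?thesis by (auto simp: W_def min_def max_def)
qed

lemma bracket_L: assumes "i \<in> {1..n}" "j \<in> {1..n}" "k \<in> {1..n}" "l \<in> {1..n}"
  shows "bracket i j k l \<in> L n"
proof -
  have I: "(min i k, max i k) \<in> Idx n" "(min j l, max j l) \<in> Idx n"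
    "(min i l, max i l) \<in> Idx n" "(min j k, max j k) \<in> Idx n"
    using assms by (simp_all add: e_Idx)
  have "bracket i j k l p = 0" if "p \<notin> Idx n" for p
  proof -
    have "p \<noteq> (min i k, max i k)" "p \<noteq> (min j l, max j l)" "p \<noteq> (min i l, max i l)" "p \<noteq> (min j k, max j k)"
      using I that by auto
    then show ?thesis unfolding bracket_def e_def by simp
  qed
  moreover have "(\<Sum>q\<in>Idx n. bracket i j k l q * W m q) = 0" for m
  proof -
    have pw: "bracket i j k l q * W m q = e i k q * W m q + e j l q * W m q - e i l q * W m q - e j k q * W m q" for q
      by (simp add: bracket_def left_diff_distrib distrib_right)
    have "(\<Sum>q\<in>Idx n. bracket i j k l q * W m q) = (\<Sum>q\<in>Idx n. e i k q * W m q) + (\<Sum>q\<in>Idx n. e j l q * W m q)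
       - (\<Sum>q\<in>Idx n. e i l q * W m q) - (\<Sum>q\<in>Idx n. e j k q * W m q)"
      by (simp only: pw sum_subtractf sum.distrib)
    then show ?thesis using assms by (simp add: Ve)
  qed
  ultimately show ?thesis by (simp add: L_char)
qed

lemma L_smult: "x \<in> L n \<Longrightarrow> (\<lambda>p. a * x p) \<in> L n"
  using zspan_smult[of x "L n" a] L_closed[of n] by simp

lemma Bprime_L: "Bprime n \<subseteq> L n"
proof
  fix b assume "b \<in> Bprime n"
  then consider (a) i j where "i \<in> {1..n-1}" "j \<in> {1..n-1}" "b = (\<lambda>p. 2 * bracket i n j n p)"
      | (b) i where "i \<in> {1..n-1}" "b = bracket i n i n"
      unfolding Bprime_def by blast
  then show "b \<in> L n"
  proof cases
    case a
    then have "bracket i n j n \<in> L n" by (intro bracket_L) auto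
    then show ?thesis using a L_smult by simp
  next
    case b
    then have "bracket i n i n \<in> L n" by (intro bracket_L) auto
    then show ?thesis using b by simp
  qed
qed

lemma gens_L: "{bracket i j i j | i j. i \<in> {1..n} \<and> j \<in> {1..n}} \<subseteq> L n"
  by (auto intro!: bracket_L)

lemma Lprime_L: "Lprime n \<subseteq> L n"
  unfolding Lprime_def by (rule zspan_L[OF gens_L])


lemma bracket_sym: "bracket n j n j = bracket j n j n"
  unfolding bracket_def using e_sym[of n j] by (simp add: algebra_simps)

lemma bracket_swap: "bracket j n i n = bracket i n j n"
  unfolding bracket_def by (simp add: e_sym[of j i] e_sym[of n i] e_sym[of n j] algebra_simps)

lemma two_bracket: "(\<lambda>p. 2 * bracket i n j n p) = bracket i n i n + bracket j n j n - bracket i j i j"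
  unfolding bracket_def using e_sym[of n j] e_sym[of n i] e_sym[of j i] by (auto simp: fun_eq_iff algebra_simps)

lemma part1: "Zspan (Bprime n) = Lprime n"
proof
  let ?G = "{bracket i j i j | i j. i \<in> {1..n} \<and> j \<in> {1..n}}"
  have g: "bracket i j i j \<in> ?G" if "i \<in> {1..n}" "j \<in> {1..n}" for i j using that by blast
  show "Zspan (Bprime n) \<subseteq> Lprime n" unfolding Lprime_def
  proof (rule zspan_subset, rule subsetI)
    fix b assume "b \<in> Bprime n"
    then consider (a) i j where "i \<in> {1..n-1}" "j \<in> {1..n-1}" "b = (\<lambda>p. 2 * bracket i n j n p)"
      | (b) i where "i \<in> {1..n-1}" "b = bracket i n i n"
      unfolding Bprime_def by blast
    then show "b \<in> Zspan ?G"
    proof cases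
      case a
      then have r: "i \<in> {1..n}" "j \<in> {1..n}" "n \<in> {1..n}" by auto
      have "bracket i n i n + bracket j n j n - bracket i j i j \<in> Zspan ?G"
        by (intro zspan_add zspan_diff zspan_base g r)
      then show ?thesis using a two_bracket by simp
    next
      case b
      then have r: "i \<in> {1..n}" "n \<in> {1..n}" by auto
      show ?thesis unfolding b(2) by (intro zspan_base g r)
    qed
  qed
  show "Lprime n \<subseteq> Zspan (Bprime n)" unfolding Lprime_def
  proof (rule zspan_subset, rule subsetI)
    fix b assume "b \<in> ?G"
    then obtain i j where ij: "i \<in> {1..n}" "j \<in> {1..n}" "b = bracket i j i j" by blast
    have B1: "bracket k n k n \<in> Zspan (Bprime n)" if "k \<in> {1..n-1}" for k
      using that by (auto intro!: zspan_base simp: Bprime_def)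
    show "b \<in> Zspan (Bprime n)"
    proof (cases "i = j")
      case True then have "b = 0" using ij by (simp add: bracket_def)
      then show ?thesis by (simp add: zspan_0)
    next
      case ne: False
      show ?thesis
      proof (cases "j = n")
        case True then show ?thesis using ij ne B1[of i] by auto
      next
        case jn: False
        show ?thesis
        proof (cases "i = n")
          case True then show ?thesis using ij ne B1[of j] bracket_sym[of n j] by auto
        next
          case False
          have "(\<lambda>p. 2 * bracket i n j n p) \<in> Zspan (Bprime n)"
            using ij ne jn False by (intro zspan_base) (auto simp: Bprime_def)
          from zspan_smult[OF this, of "-1"]
          have "(\<lambda>p. -1 * (2 * bracket i n j n p)) \<in> Zspan (Bprime n)" .
          moreover have "b = bracket i n i n + bracket j n j n + (\<lambda>p. -1 * (2 * bracket i n j n p))"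
            using ij two_bracket[of i n j] by (auto simp: fun_eq_iff algebra_simps)
          ultimately show ?thesis using B1[of i] B1[of j] ij jn False
            by (auto intro!: zspan_add)
        qed
      qed
    qed
  qed
qed

lemma br_val:
  assumes "i' \<noteq> j'" "i' < n" "j' < n" "i < n" "j < n"
  shows "bracket i' n j' n (i, j) = (if (i, j) = (min i' j', max i' j') then 1 else 0)"
proof -
  have "e n n (i, j) = 0" "e i' n (i, j) = 0" "e n j' (i, j) = 0"
    using assms by (simp_all add: e_app)
  then show ?thesis unfolding bracket_def by (simp add: e_app)
qed

lemma br_diag:
  assumes "k < n" "i < n" "j < n"
  shows "bracket k n k n (i, j) = (if i = k \<and> j = k then 1 else 0)"
proof -
  have "e n n (i, j) = 0" "e k n (i, j) = 0" "e n k (i, j) = 0"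
    using assms by (simp_all add: e_app)
  then show ?thesis unfolding bracket_def by (simp add: e_app)
qed

lemma minmax_eq:
  assumes "i \<noteq> (j::nat)" "i' \<noteq> j'" "(min i j, max i j) = (min i' j', max i' j')"
  shows "(i' = i \<and> j' = j) \<or> (i' = j \<and> j' = i)"
  using assms by (auto simp: min_def max_def split: if_splits)

lemma part2: assumes "b \<in> Bprime n" shows "Zspan (Bprime n - {b}) \<noteq> Lprime n"
proof
  assume eq: "Zspan (Bprime n - {b}) = Lprime n"
  have bin: "b \<in> Zspan (Bprime n - {b})"
    using eq part1[of n] zspan_base[OF assms] by simp
  from assms consider (a) i j where "i \<in> {1..n-1}" "j \<in> {1..n-1}" "i \<noteq> j" "b = (\<lambda>p. 2 * bracket i n j n p)"
      | (b) k where "k \<in> {1..n-1}" "b = bracket k n k n"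
      unfolding Bprime_def by blast
  then show False
  proof cases
    case a
    let ?p = "(min i j, max i j)"
    have lt: "min i j < n" "max i j < n" using a by auto
    have "\<forall>v\<in>Bprime n - {b}. 0 dvd v ?p"
    proof
      fix v assume that: "v \<in> Bprime n - {b}"
      from that consider (a) i' j' where "i' \<in> {1..n-1}" "j' \<in> {1..n-1}" "i' \<noteq> j'" "v = (\<lambda>p. 2 * bracket i' n j' n p)" "v \<noteq> b"
        | (b) k where "k \<in> {1..n-1}" "v = bracket k n k n"
        unfolding Bprime_def by blast
      then show "0 dvd v ?p"
      proof cases
        case a2: a
        have ne: "?p \<noteq> (min i' j', max i' j')"
        proof
          assume "?p = (min i' j', max i' j')"
          then have "(i' = i \<and> j' = j) \<or> (i' = j \<and> j' = i)" using minmax_eq a(3) a2(3) by blast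
          then have "v = b" using a(4) a2(4) bracket_swap[of j n i] by auto
          then show False using a2(5) by simp
        qed
        have "i' < n" "j' < n" using a2 by auto
        then have "bracket i' n j' n ?p = 0" using br_val[OF a2(3) _ _ lt] ne by simp
        then show ?thesis using a2(4) by simp
      next
        case b
        have "k < n" using b by auto
        then have "bracket k n k n ?p = 0" using br_diag[OF _ lt(1) lt(2)] a(3) by (auto simp: min_def max_def)
        then show ?thesis using b(2) by simp
      qed
    qed
    then have "0 dvd b ?p" by (rule zspan_point[OF bin])
    moreover have "bracket i n j n ?p = 1" using br_val[OF a(3) _ _ lt] a by auto
    ultimately show False using a(4) by simp
  next
    case b
    have kn: "k < n" using b by auto
    have "\<forall>v\<in>Bprime n - {b}. 0 dvd v (k, k)"
    proof
      fix v assume that: "v \<in> Bprime n - {b}"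
      from that consider (a) i' j' where "i' \<in> {1..n-1}" "j' \<in> {1..n-1}" "i' \<noteq> j'" "v = (\<lambda>p. 2 * bracket i' n j' n p)"
        | (b) k' where "k' \<in> {1..n-1}" "v = bracket k' n k' n" "v \<noteq> b"
        unfolding Bprime_def by blast
      then show "0 dvd v (k, k)"
      proof cases
        case a
        have "i' < n" "j' < n" using a by auto
        then have "bracket i' n j' n (k, k) = 0" using br_val[OF a(3) _ _ kn kn] a(3) by (auto simp: min_def max_def)
        then show ?thesis using a(4) by simp
      next
        case b2: b
        have "k' \<noteq> k" using b2 b by auto
        moreover have "k' < n" using b2 by auto
        ultimately have "bracket k' n k' n (k, k) = 0" using br_diag[OF _ kn kn] by simp
        then show ?thesis using b2(2) by simp
      qed
    qed
    then have "0 dvd b (k, k)" by (rule zspan_point[OF bin])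
    moreover have "bracket k n k n (k, k) = 1" using br_diag[OF kn kn kn] by simp
    ultimately show False using b(2) by simp
  qed
qed


definition Pm :: "nat \<Rightarrow> (nat \<times> nat) set" where
  "Pm m = {(i, j). 1 \<le> i \<and> i < j \<and> j \<le> m}"

lemma finite_Pm: "finite (Pm m)"
  by (rule finite_subset[of _ "{1..m} \<times> {1..m}"]) (auto simp: Pm_def)

lemma inj_Pm: "inj_on (\<lambda>(i, j). {i, j}) (Pm m)"
proof (rule inj_onI)
  fix p q assume p: "p \<in> Pm m" and q: "q \<in> Pm m" and eq: "(\<lambda>(i, j). {i, j}) p = (\<lambda>(i, j). {i::nat, j}) q"
  obtain a b where ab: "p = (a, b)" "a < b" using p by (auto simp: Pm_def)
  obtain c d where cd: "q = (c, d)" "c < d" using q by (auto simp: Pm_def)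
  have "{a, b} = {c, d}" using eq ab cd by simp
  then have "(a = c \<and> b = d) \<or> (a = d \<and> b = c)" by (simp add: doubleton_eq_iff)
  then show "p = q" using ab cd by auto
qed

lemma img_Pm: "(\<lambda>(i, j). {i, j}) ` Pm m = {A. A \<subseteq> {1..m} \<and> card A = 2}"
proof
  show "(\<lambda>(i, j). {i, j}) ` Pm m \<subseteq> {A. A \<subseteq> {1..m} \<and> card A = 2}"
  proof
    fix A assume "A \<in> (\<lambda>(i, j). {i, j}) ` Pm m"
    then obtain a b where "A = {a, b}" "1 \<le> a" "a < b" "b \<le> m" by (auto simp: Pm_def)
    then show "A \<in> {A. A \<subseteq> {1..m} \<and> card A = 2}" by auto
  qed
  show "{A. A \<subseteq> {1..m} \<and> card A = 2} \<subseteq> (\<lambda>(i, j). {i, j}) ` Pm m"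
  proof
    fix A assume A0: "A \<in> {A. A \<subseteq> {1..m} \<and> card A = 2}"
    then have "card A = 2" by simp
    then obtain x y where A: "A = {x, y}" "x \<noteq> y" unfolding card_2_iff by blast
    have xy: "x \<in> {1..m}" "y \<in> {1..m}" using A0 A by auto
    show "A \<in> (\<lambda>(i, j). {i, j}) ` Pm m"
    proof (cases "x < y")
      case True
      then have "(x, y) \<in> Pm m" using xy by (simp add: Pm_def)
      moreover have "A = (\<lambda>(i, j). {i, j}) (x, y)" using A by simp
      ultimately show ?thesis by (rule rev_image_eqI)
    next
      case False
      then have "y < x" using A by simp
      then have "(y, x) \<in> Pm m" using xy by (simp add: Pm_def)
      moreover have "A = (\<lambda>(i, j). {i, j}) (y, x)" using A by auto
      ultimately show ?thesis by (rule rev_image_eqI)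
    qed
  qed
qed

lemma card_Pm: "card (Pm m) = m choose 2"
proof -
  have "bij_betw (\<lambda>(i, j). {i, j}) (Pm m) {A. A \<subseteq> {1..m} \<and> card A = 2}"
    by (rule bij_betw_imageI[OF inj_Pm img_Pm])
  then have "card (Pm m) = card {A. A \<subseteq> {1..m} \<and> card A = 2}" by (rule bij_betw_same_card)
  also have "\<dots> = m choose 2" using n_subsets[of "{1..m}" 2] by simp
  finally show ?thesis .
qed

lemma group_Lgroup: "group (Lgroup n)"
proof (rule groupI)
  fix x assume x: "x \<in> carrier (Lgroup n)"
  then have "- x \<in> carrier (Lgroup n)" "- x \<otimes>\<^bsub>Lgroup n\<^esub> x = \<one>\<^bsub>Lgroup n\<^esub>"
    by (simp_all add: Lgroup_def L_neg)
  then show "\<exists>y\<in>carrier (Lgroup n). y \<otimes>\<^bsub>Lgroup n\<^esub> x = \<one>\<^bsub>Lgroup n\<^esub>" by blast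
qed (simp_all add: Lgroup_def L_add L_0 add.assoc)

lemma bracket_P: assumes "q \<in> Pm (n-1)" "(i, j) \<in> Pm (n-1)"
  shows "bracket (fst q) n (snd q) n (i, j) = (if q = (i, j) then 1 else 0)"
proof -
  obtain a b where q: "q = (a, b)" "a < b" "b < n" using assms(1) by (cases q) (auto simp: Pm_def)
  have ij: "i < n" "j < n" using assms(2) by (auto simp: Pm_def)
  have "a \<noteq> b" "a < n" using q by auto
  from br_val[OF this q(3) ij] q show ?thesis by (auto simp: min_def max_def)
qed

lemma bracket_P_diag: assumes "q \<in> Pm (n-1)" "i < n"
  shows "bracket (fst q) n (snd q) n (i, i) = 0"
proof -
  obtain a b where q: "q = (a, b)" "a < b" "b < n" using assms(1) by (cases q) (auto simp: Pm_def)
  have "a \<noteq> b" "a < n" using q by auto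
  from br_val[OF this q(3) assms(2) assms(2)] q show ?thesis by (auto simp: min_def max_def)
qed

lemma bracket_diag: assumes "k < n" "i < j" "j < n"
  shows "bracket k n k n (i, j) = 0"
  using br_diag[OF assms(1) _ assms(3), of i] assms by simp

lemma bracket_diag2: assumes "k < n" "i < n"
  shows "bracket k n k n (i, i) = (if k = i then 1 else 0)"
  using br_diag[OF assms(1) assms(2) assms(2)] by auto


lemma L_zero:
  assumes z: "z \<in> L n" and n: "n \<ge> 1"
    and h: "\<And>i j. 1 \<le> i \<Longrightarrow> i \<le> j \<Longrightarrow> j < n \<Longrightarrow> z (i, j) = 0"
  shows "z = 0"
proof -
  have supp: "\<And>p. p \<notin> Idx n \<Longrightarrow> z p = 0" and V: "\<And>m. m \<in> {1..n} \<Longrightarrow> (\<Sum>q\<in>Idx n. z q * W m q) = 0"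
    using z by (auto simp: L_char)
  have zn: "z (a, n) = 0" if "1 \<le> a" "a < n" for a
  proof -
    have "(\<Sum>q\<in>Idx n. z q * W a q) = (\<Sum>q\<in>Idx n. if q = (a, n) then z (a, n) else 0)"
    proof (rule sum.cong[OF refl])
      fix q assume q: "q \<in> Idx n"
      obtain s t where st: "q = (s, t)" by fastforce
      show "z q * W a q = (if q = (a, n) then z (a, n) else 0)"
      proof (cases "t < n")
        case True then show ?thesis using h[of s t] q st that by (auto simp: Idx_def)
      next
        case False then have "t = n" using q st by (auto simp: Idx_def)
        then show ?thesis using st that by (auto simp: W_def)
      qed
    qed
    also have "\<dots> = z (a, n)" using finite_Idx that by (simp add: Idx_def)
    finally show ?thesis using V[of a] that by simp
  qed
  have znn: "z (n, n) = 0"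
  proof -
    have "(\<Sum>q\<in>Idx n. z q * W n q) = (\<Sum>q\<in>Idx n. if q = (n, n) then 2 * z (n, n) else 0)"
    proof (rule sum.cong[OF refl])
      fix q assume q: "q \<in> Idx n"
      obtain s t where st: "q = (s, t)" by fastforce
      show "z q * W n q = (if q = (n, n) then 2 * z (n, n) else 0)"
      proof (cases "t < n")
        case True then show ?thesis using h[of s t] q st by (auto simp: Idx_def)
      next
        case False then have "t = n" using q st by (auto simp: Idx_def)
        then show ?thesis using st zn[of s] q by (auto simp: W_def Idx_def)
      qed
    qed
    also have "\<dots> = 2 * z (n, n)" using finite_Idx n by (simp add: Idx_def)
    finally show ?thesis using V[of n] n by simp
  qed
  show ?thesis
  proof (rule ext)
    fix p show "z p = 0 p"
    proof (cases "p \<in> Idx n")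
      case False then show ?thesis using supp by simp
    next
      case True
      obtain s t where st: "p = (s, t)" by fastforce
      show ?thesis using True h[of s t] zn[of s] znn st
        by (cases "t < n"; cases "s = n") (auto simp: Idx_def)
    qed
  qed
qed

lemma kernel_sub:
  assumes x: "x \<in> L n" and n: "n \<ge> 2" and ev: "\<forall>q\<in>Pm (n-1). 2 dvd x q"
  shows "x \<in> Lprime n"
proof -
  define u where "u = (\<Sum>q\<in>Pm (n-1). (\<lambda>p. (x q div 2) * (2 * bracket (fst q) n (snd q) n p)))
     + (\<Sum>i\<in>{1..n-1}. (\<lambda>p. x (i, i) * bracket i n i n p))"
  have m1: "(\<lambda>p. 2 * bracket (fst q) n (snd q) n p) \<in> Zspan (Bprime n)" if qP: "q \<in> Pm (n-1)" for q
  proof -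
    obtain a b where ab: "q = (a, b)" "1 \<le> a" "a < b" "b \<le> n - 1" using qP by (auto simp: Pm_def)
    have "(\<lambda>p. 2 * bracket (fst q) n (snd q) n p) \<in> Bprime n"
      unfolding Bprime_def
      apply (rule UnI1)
      apply (rule CollectI)
      apply (rule exI[of _ a])
      apply (rule exI[of _ b])
      using ab by auto
    then show ?thesis by (rule zspan_base)
  qed
  have m2: "bracket i n i n \<in> Zspan (Bprime n)" if "i \<in> {1..n-1}" for i
    using that by (intro zspan_base) (auto simp: Bprime_def)
  have uB: "u \<in> Zspan (Bprime n)" unfolding u_def
  proof (rule zspan_add)
    show "(\<Sum>q\<in>Pm (n-1). (\<lambda>p. (x q div 2) * (2 * bracket (fst q) n (snd q) n p))) \<in> Zspan (Bprime n)"
      by (rule zspan_sum) (rule zspan_smult[OF m1])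
    show "(\<Sum>i\<in>{1..n-1}. (\<lambda>p. x (i, i) * bracket i n i n p)) \<in> Zspan (Bprime n)"
      by (rule zspan_sum) (rule zspan_smult[OF m2])
  qed
  have uL: "u \<in> L n" using uB zspan_L[OF Bprime_L] by blast
  have "x - u = 0"
  proof (rule L_zero)
    show "x - u \<in> L n" using x uL L_add L_neg by (metis diff_conv_add_uminus)
    show "1 \<le> n" using n by simp
    fix i j assume ij: "1 \<le> i" "i \<le> j" "j < n"
    show "(x - u) (i, j) = 0"
    proof (cases "i = j")
      case True
      have "u (i, j) = (\<Sum>q\<in>Pm (n-1). (x q div 2) * (2 * bracket (fst q) n (snd q) n (i, i)))
         + (\<Sum>k\<in>{1..n-1}. x (k, k) * bracket k n k n (i, i))"
        using True by (simp add: u_def sum_fun_apply')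
      also have "\<dots> = (\<Sum>k\<in>{1..n-1}. if k = i then x (i, i) else 0)"
      proof -
        have "(\<Sum>q\<in>Pm (n-1). (x q div 2) * (2 * bracket (fst q) n (snd q) n (i, i))) = 0"
          by (rule sum.neutral) (use ij in \<open>simp add: bracket_P_diag\<close>)
        moreover have "(\<Sum>k\<in>{1..n-1}. x (k, k) * bracket k n k n (i, i)) = (\<Sum>k\<in>{1..n-1}. if k = i then x (i, i) else 0)"
        proof (rule sum.cong[OF refl])
          fix k assume "k \<in> {1..n-1}"
          then have "k < n" using n by auto
          then show "x (k, k) * bracket k n k n (i, i) = (if k = i then x (i, i) else 0)"
            using ij by (simp add: bracket_diag2)
        qed
        ultimately show ?thesis by simp
      qed
      also have "\<dots> = x (i, i)" using ij by simp
      finally show ?thesis using True by simp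
    next
      case False
      have ijP: "(i, j) \<in> Pm (n-1)" using ij False by (auto simp: Pm_def)
      have "u (i, j) = (\<Sum>q\<in>Pm (n-1). (x q div 2) * (2 * bracket (fst q) n (snd q) n (i, j)))
         + (\<Sum>k\<in>{1..n-1}. x (k, k) * bracket k n k n (i, j))"
        by (simp add: u_def sum_fun_apply')
      also have "\<dots> = (\<Sum>q\<in>Pm (n-1). if q = (i, j) then (x (i, j) div 2) * 2 else 0)"
      proof -
        have "(\<Sum>k\<in>{1..n-1}. x (k, k) * bracket k n k n (i, j)) = 0"
        proof (rule sum.neutral, rule ballI)
          fix k assume "k \<in> {1..n-1}"
          then have "k < n" using n by auto
          then show "x (k, k) * bracket k n k n (i, j) = 0"
            using ij False by (simp add: bracket_diag)
        qed
        moreover have "(\<Sum>q\<in>Pm (n-1). (x q div 2) * (2 * bracket (fst q) n (snd q) n (i, j)))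
            = (\<Sum>q\<in>Pm (n-1). if q = (i, j) then (x (i, j) div 2) * 2 else 0)"
          by (rule sum.cong[OF refl]) (use ijP in \<open>simp add: bracket_P\<close>)
        ultimately show ?thesis by simp
      qed
      also have "\<dots> = x (i, j)" using ijP finite_Pm ev by simp
      finally show ?thesis by simp
    qed
  qed
  then have "x = u" by simp
  then show ?thesis using uB part1 by simp
qed

lemma kernel_sup:
  assumes x: "x \<in> Lprime n" and q: "q \<in> Pm (n-1)"
  shows "2 dvd x q"
proof -
  obtain i j where q': "q = (i, j)" "i < j" using q by (auto simp: Pm_def)
  show ?thesis unfolding q'(1)
  proof (rule zspan_point[OF x[unfolded Lprime_def]], safe)
    fix a b :: nat
    show "2 dvd bracket a b a b (i, j)"
      using q'(2) e_sym[of a b] by (auto simp: bracket_def e_app)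
  qed
qed


lemma part3:
  assumes n: "n \<ge> 2"
  shows "(Lgroup n Mod Lprime n) \<cong> product_group {..<((n - 1) choose 2)} (\<lambda>_. integer_mod_group 2)"
proof -
  let ?c = "(n - 1) choose 2"
  let ?I = "{..<?c}"
  let ?P = "Pm (n-1)"
  let ?H = "product_group ?I (\<lambda>_. integer_mod_group 2)"
  obtain f where f: "bij_betw f {0..<card ?P} ?P" using ex_bij_betw_nat_finite[OF finite_Pm] by blast
  then have f: "bij_betw f ?I ?P" by (simp add: card_Pm atLeast0LessThan)
  define h where "h x = (\<lambda>k\<in>?I. x (f k) mod 2)" for x :: "nat \<times> nat \<Rightarrow> int"
  have cH: "carrier ?H = (\<Pi>\<^sub>E k\<in>?I. {0..<2})"
    by (simp add: carrier_integer_mod_group)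
  have gH: "group ?H" by simp
  have hom: "h \<in> hom (Lgroup n) ?H"
  proof (rule homI)
    fix x assume "x \<in> carrier (Lgroup n)"
    show "h x \<in> carrier ?H" unfolding cH h_def by auto
  next
    fix x y assume "x \<in> carrier (Lgroup n)" "y \<in> carrier (Lgroup n)"
    show "h (x \<otimes>\<^bsub>Lgroup n\<^esub> y) = h x \<otimes>\<^bsub>?H\<^esub> h y"
      by (auto simp: h_def Lgroup_def fun_eq_iff mod_add_eq)
  qed
  have gh: "group_hom (Lgroup n) ?H h"
    using group_Lgroup gH hom by (simp add: group_hom_def group_hom_axioms_def)
  have ker: "kernel (Lgroup n) ?H h = Lprime n"
  proof
    show "kernel (Lgroup n) ?H h \<subseteq> Lprime n"
    proof
      fix x assume "x \<in> kernel (Lgroup n) ?H h"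
      then have xL: "x \<in> L n" and hx: "h x = (\<lambda>k\<in>?I. 0)" by (auto simp: kernel_def Lgroup_def)
      have "2 dvd x q" if qP: "q \<in> ?P" for q
      proof -
        obtain k where k: "k \<in> ?I" "q = f k" using f qP unfolding bij_betw_def by blast
        have "h x k = 0" using hx k by simp
        then show ?thesis using k by (simp add: h_def dvd_eq_mod_eq_0)
      qed
      then show "x \<in> Lprime n" using kernel_sub[OF xL n] by blast
    qed
    show "Lprime n \<subseteq> kernel (Lgroup n) ?H h"
    proof
      fix x assume x: "x \<in> Lprime n"
      have "x (f k) mod 2 = 0" if kI: "k \<in> ?I" for k
      proof -
        have "f k \<in> ?P" using f kI unfolding bij_betw_def by blast
        then have "2 dvd x (f k)" by (rule kernel_sup[OF x])
        then show ?thesis by simp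
      qed
      then have "h x = (\<lambda>k\<in>?I. 0)" by (auto simp: h_def fun_eq_iff)
      then show "x \<in> kernel (Lgroup n) ?H h"
        using x Lprime_L by (auto simp: kernel_def Lgroup_def)
    qed
  qed
  have onto: "h ` carrier (Lgroup n) = carrier ?H"
  proof
    show "h ` carrier (Lgroup n) \<subseteq> carrier ?H" using hom by (auto simp: hom_def)
    show "carrier ?H \<subseteq> h ` carrier (Lgroup n)"
    proof
      fix t assume t: "t \<in> carrier ?H"
      then have t': "t \<in> (\<Pi>\<^sub>E k\<in>?I. {0..<2})" using cH by simp
      define x where "x = (\<Sum>k\<in>?I. (\<lambda>p. t k * bracket (fst (f k)) n (snd (f k)) n p))"
      have "x \<in> L n" unfolding x_def
      proof (subst L_closed, intro zspan_sum zspan_smult zspan_base)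
        fix k assume "k \<in> ?I"
        then have "f k \<in> ?P" using f by (auto simp: bij_betw_def)
        then show "bracket (fst (f k)) n (snd (f k)) n \<in> L n"
          using n by (intro bracket_L) (auto simp: Pm_def)
      qed
      moreover have "h x = t"
      proof (rule ext)
        fix k
        show "h x k = t k"
        proof (cases "k \<in> ?I")
          case False then show ?thesis using t' by (simp add: h_def PiE_def extensional_def)
        next
          case True
          have fk: "f k \<in> ?P" using f True by (auto simp: bij_betw_def)
          have "x (f k) = (\<Sum>k'\<in>?I. t k' * bracket (fst (f k')) n (snd (f k')) n (f k))"
            by (simp add: x_def sum_fun_apply')
          also have "\<dots> = (\<Sum>k'\<in>?I. if k' = k then t k else 0)"
          proof (rule sum.cong[OF refl])
            fix k' assume k': "k' \<in> ?I"
            have fk': "f k' \<in> ?P" using f k' by (auto simp: bij_betw_def)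
            have "f k' = f k \<longleftrightarrow> k' = k" using f k' True by (auto simp: bij_betw_def inj_on_def)
            then show "t k' * bracket (fst (f k')) n (snd (f k')) n (f k) = (if k' = k then t k else 0)"
              using bracket_P[OF fk', of "fst (f k)" "snd (f k)"] fk by auto
          qed
          also have "\<dots> = t k" using True by simp
          finally show ?thesis using True t' by (auto simp: h_def PiE_def Pi_def)
        qed
      qed
      ultimately show "t \<in> h ` carrier (Lgroup n)" by (auto simp: Lgroup_def)
    qed
  qed
  show ?thesis using group_hom.FactGroup_iso[OF gh onto] ker by simp
qed

theorem proposition2p3:
  fixes n :: nat
  assumes "n \<ge> 2"
  shows "Zspan (Bprime n) = Lprime n
         \<and> (\<forall>b\<in>Bprime n. Zspan (Bprime n - {b}) \<noteq> Lprime n)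
         \<and> (Lgroup n Mod Lprime n) \<cong> product_group {..<((n - 1) choose 2)} (\<lambda>_. integer_mod_group 2)"
  using part1 part2 part3[OF assms] by blast

end
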